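(* Let $(X,0)\subset(\mathbb{C}^{n+1},0)$ be a reduced germ of analytic singularity of pure dimension $d$, let $\varphi:(\mathfrak{X},0)\to(\mathbb{C},0)$ be its specialization to the tangent cone, $\mathfrak{X}^0$ the smooth part of $\mathfrak{X}$ and $Y=\{0\}\times\mathbb{C}\subset\mathfrak{X}$. If the pair $(\mathfrak{X}^0,Y)$ satisfies Whitney's condition a) at the origin, then it also satisfies Whitney's condition b) at the origin.
   Context: Specialization: with $I=\langle f_1,\dots,f_p\rangle\subset\mathbb{C}\{z_0,\dots,z_n\}$ the ideal of $X$, the generators chosen so that their initial forms (lowest-degree homogeneous parts), of degrees $m_i$, generate the ideal of initial forms of $I$ (which defines the tangent cone), set $F_i(z,t)=t^{-m_i}f_i(tz_0,\dots,tz_n)$; $\mathfrak{X}=V(F_1,\dots,F_p)\subset(\mathbb{C}^{n+1}\times\mathbb{C},0)$ and $\varphi$ is the projection to $t$. Whitney conditions at $y\in Y$: a) for every sequence $x_i\in\mathfrak{X}^0$ tending to $y$ with $T_{x_i}\mathfrak{X}\to T$, $T_yY\subset T$; b) for all sequences $x_i\in\mathfrak{X}^0\setminus Y$, $y_i\in Y$ tending to $y$ with $T_{x_i}\mathfrak{X}\to T$ and $\overline{x_iy_i}\to\ell$, $\ell\subset T$. *)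

theory Defs
  imports "HOL-Analysis.Analysis"
begin

definition cmul :: "complex \<Rightarrow> complex^'k \<Rightarrow> complex^'k" where
  "cmul c v = (\<chi> j. c * v $ j)"

definition holo_on :: "(complex^'k) set \<Rightarrow> (complex^'k \<Rightarrow> complex) \<Rightarrow> bool" where
  "holo_on V g \<longleftrightarrow> open V \<and>
     (\<forall>x\<in>V. \<exists>D. (g has_derivative D) (at x) \<and> (\<forall>v. D (cmul \<i> v) = \<i> * D v))"

definition poly_fun :: "(complex^'k \<Rightarrow> complex) \<Rightarrow> bool" where
  "poly_fun q \<longleftrightarrow> (\<exists>(c :: ('k \<Rightarrow> nat) \<Rightarrow> complex) A. finite A \<and>
      q = (\<lambda>z. \<Sum>\<alpha>\<in>A. c \<alpha> * (\<Prod>j\<in>UNIV. z $ j ^ \<alpha> j)))"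

text \<open>Degree-k homogeneous part of the Taylor expansion at 0: the t^k coefficient of t \<mapsto> g(tz).\<close>
definition hom_part :: "(complex^'k \<Rightarrow> complex) \<Rightarrow> nat \<Rightarrow> complex^'k \<Rightarrow> complex" where
  "hom_part g k z = (deriv ^^ k) (\<lambda>t. g (cmul t z)) 0 / of_nat (fact k)"

definition ord0 :: "(complex^'k \<Rightarrow> complex) \<Rightarrow> nat" where
  "ord0 g = (LEAST k. hom_part g k \<noteq> (\<lambda>_. 0))"

definition initial_form :: "(complex^'k \<Rightarrow> complex) \<Rightarrow> complex^'k \<Rightarrow> complex" where
  "initial_form g = hom_part g (ord0 g)"

definition local_eqns ::
  "(complex^'m) set \<Rightarrow> complex^'m \<Rightarrow> (complex^'m) set \<Rightarrow> nat \<Rightarrow>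
   (nat \<Rightarrow> complex^'m \<Rightarrow> complex) \<Rightarrow> (nat \<Rightarrow> complex^'m \<Rightarrow> complex) \<Rightarrow> bool" where
  "local_eqns S x V r g D \<longleftrightarrow> x \<in> S \<and> open V \<and> x \<in> V \<and>
     (\<forall>j<r. holo_on V (g j)) \<and>
     S \<inter> V = {y\<in>V. \<forall>j<r. g j y = 0} \<and>
     (\<forall>j<r. (g j has_derivative D j) (at x)) \<and>
     (\<forall>c :: nat \<Rightarrow> complex. (\<forall>v. (\<Sum>j<r. c j * D j v) = 0) \<longrightarrow> (\<forall>j<r. c j = 0))"

definition smooth_pt_dim :: "(complex^'m) set \<Rightarrow> complex^'m \<Rightarrow> nat \<Rightarrow> bool" where
  "smooth_pt_dim S x k \<longleftrightarrow> (\<exists>V r g D. local_eqns S x V r g D \<and> k + r = CARD('m))"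

definition smooth_part :: "(complex^'m) set \<Rightarrow> (complex^'m) set" where
  "smooth_part S = {x. \<exists>k. smooth_pt_dim S x k}"

definition tangent_at :: "(complex^'m) set \<Rightarrow> complex^'m \<Rightarrow> (complex^'m) set \<Rightarrow> bool" where
  "tangent_at S x T \<longleftrightarrow> (\<exists>V r g D. local_eqns S x V r g D \<and> T = {v. \<forall>j<r. D j v = 0})"

section \<open>Convergence of linear subspaces (Grassmannian topology via orthogonal projections)\<close>

definition oproj :: "(complex^'m) set \<Rightarrow> complex^'m \<Rightarrow> complex^'m" where
  "oproj T v = (THE w. w \<in> T \<and> (\<forall>u\<in>T. inner (v - w) u = 0))"

definition subspace_conv :: "(nat \<Rightarrow> (complex^'m) set) \<Rightarrow> (complex^'m) set \<Rightarrow> bool" where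
  "subspace_conv Ts T \<longleftrightarrow> subspace T \<and> (\<forall>i. subspace (Ts i)) \<and>
     (\<forall>v. (\<lambda>i. oproj (Ts i) v) \<longlonglongrightarrow> oproj T v)"

definition cline :: "complex^'m \<Rightarrow> (complex^'m) set" where
  "cline v = range (\<lambda>c. cmul c v)"

definition whitney_a :: "(complex^'m) set \<Rightarrow> (complex^'m) set \<Rightarrow> complex^'m \<Rightarrow> bool" where
  "whitney_a Xs Y y \<longleftrightarrow> (\<forall>xs Ts T. (\<forall>i. xs i \<in> smooth_part Xs \<and> tangent_at Xs (xs i) (Ts i)) \<longrightarrow>
      xs \<longlonglongrightarrow> y \<longrightarrow> subspace_conv Ts T \<longrightarrow> (\<forall>TY. tangent_at Y y TY \<longrightarrow> TY \<subseteq> T))"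

definition whitney_b :: "(complex^'m) set \<Rightarrow> (complex^'m) set \<Rightarrow> complex^'m \<Rightarrow> bool" where
  "whitney_b Xs Y y \<longleftrightarrow> (\<forall>xs ys Ts T L.
      (\<forall>i. xs i \<in> smooth_part Xs - Y \<and> ys i \<in> Y \<and> tangent_at Xs (xs i) (Ts i)) \<longrightarrow>
      xs \<longlonglongrightarrow> y \<longrightarrow> ys \<longlonglongrightarrow> y \<longrightarrow> subspace_conv Ts T \<longrightarrow>
      subspace_conv (\<lambda>i. cline (xs i - ys i)) L \<longrightarrow> L \<subseteq> T)"

definition germ_zero_set :: "(complex^'n) set \<Rightarrow> nat \<Rightarrow> (nat \<Rightarrow> complex^'n \<Rightarrow> complex) \<Rightarrow> bool" where
  "germ_zero_set X p f \<longleftrightarrow> (\<exists>V. open V \<and> 0 \<in> V \<and> X \<inter> V = {z\<in>V. \<forall>i<p. f i z = 0})"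

definition in_ideal_of :: "(complex^'n) set \<Rightarrow> (complex^'n) set \<Rightarrow> (complex^'n \<Rightarrow> complex) \<Rightarrow> bool" where
  "in_ideal_of X V g \<longleftrightarrow> open V \<and> 0 \<in> V \<and> holo_on V g \<and> (\<forall>x\<in>X \<inter> V. g x = 0)"

definition generates_ideal :: "(complex^'n) set \<Rightarrow> nat \<Rightarrow> (nat \<Rightarrow> complex^'n \<Rightarrow> complex) \<Rightarrow> bool" where
  "generates_ideal X p f \<longleftrightarrow> (\<forall>V g. in_ideal_of X V g \<longrightarrow>
     (\<exists>V' a. open V' \<and> 0 \<in> V' \<and> V' \<subseteq> V \<and> (\<forall>i<p. holo_on V' (a i)) \<and>
        (\<forall>z\<in>V'. g z = (\<Sum>i<p. a i z * f i z))))"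

definition initial_forms_generate :: "(complex^'n) set \<Rightarrow> nat \<Rightarrow> (nat \<Rightarrow> complex^'n \<Rightarrow> complex) \<Rightarrow> bool" where
  "initial_forms_generate X p f \<longleftrightarrow> (\<forall>V g. in_ideal_of X V g \<longrightarrow> (\<exists>k. hom_part g k \<noteq> (\<lambda>_. 0)) \<longrightarrow>
     (\<exists>b. (\<forall>i<p. poly_fun (b i)) \<and> initial_form g = (\<lambda>z. \<Sum>i<p. b i z * initial_form (f i) z)))"

definition pure_dim :: "(complex^'n) set \<Rightarrow> nat \<Rightarrow> bool" where
  "pure_dim X d \<longleftrightarrow> (\<exists>V. open V \<and> 0 \<in> V \<and>
     (\<forall>x\<in>X \<inter> V. \<forall>k. smooth_pt_dim X x k \<longrightarrow> k = d) \<and>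
     X \<inter> V \<subseteq> closure {x. smooth_pt_dim X x d})"

text \<open>C^{n+1} x C is modelled as complex^('n option): coordinate None is t, Some j are the z_j.\<close>
definition zpart :: "complex^('n::finite option) \<Rightarrow> complex^'n" where
  "zpart w = (\<chi> j. w $ Some j)"

definition tpart :: "complex^('n::finite option) \<Rightarrow> complex" where
  "tpart w = w $ None"

definition Fspec :: "(nat \<Rightarrow> complex^'n::finite \<Rightarrow> complex) \<Rightarrow> nat \<Rightarrow> complex^('n option) \<Rightarrow> complex" where
  "Fspec f i w = (if tpart w = 0 then initial_form (f i) (zpart w)
                  else f i (cmul (tpart w) (zpart w)) / tpart w ^ ord0 (f i))"

text \<open>Specialization space V(F_1,..,F_p), on the open set where the F_i are defined (tz \<in> U).\<close>
definition spec_space :: "(complex^'n::finite) set \<Rightarrow> nat \<Rightarrow> (nat \<Rightarrow> complex^'n \<Rightarrow> complex) \<Rightarrow> (complex^('n option)) set" where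
  "spec_space U p f = {w. cmul (tpart w) (zpart w) \<in> U \<and> (\<forall>i<p. Fspec f i w = 0)}"

definition spec_axis :: "(complex^('n::finite option)) set" where
  "spec_axis = {w. zpart w = 0}"

end

theory Submission
  imports Defs "HOL-Complex_Analysis.Complex_Analysis"
begin

lemma oproj_unique:
  assumes "subspace S" "w \<in> S" "\<forall>u\<in>S. inner (v - w) u = 0"
  shows "oproj S v = w"
  unfolding oproj_def
proof (rule the_equality)
  show "w \<in> S \<and> (\<forall>u\<in>S. inner (v - w) u = 0)" using assms by blast
next
  fix w' assume h: "w' \<in> S \<and> (\<forall>u\<in>S. inner (v - w') u = 0)"
  have d: "w' - w \<in> S" using assms h by (simp add: subspace_diff)
  have "inner (v - w) (w' - w) = 0" "inner (v - w') (w' - w) = 0" using assms h d by auto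
  hence "inner (w' - w) (w' - w) = 0"
  proof -
    have "(v - w) - (v - w') = w' - w" by simp
    hence "inner (w' - w) (w' - w) = inner (v - w) (w' - w) - inner (v - w') (w' - w)"
      by (metis inner_diff_left)
    thus ?thesis using \<open>inner (v - w) (w' - w) = 0\<close> \<open>inner (v - w') (w' - w) = 0\<close> by simp
  qed
  thus "w' = w" by simp
qed

lemma oproj_ex:
  fixes S :: "(complex^'m) set"
  assumes "subspace S"
  shows "oproj S v \<in> S \<and> (\<forall>u\<in>S. inner (v - oproj S v) u = 0)"
proof -
  obtain y z where y: "y \<in> span S" and z: "\<And>w. w \<in> span S \<Longrightarrow> orthogonal z w" and e: "v = y + z"
    using orthogonal_subspace_decomp_exists[of S v] by blast
  have sp: "span S = S" using assms by (simp add: span_eq_iff)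
  have yS: "y \<in> S" using y sp by simp
  have "\<forall>u\<in>S. inner (v - y) u = 0" using z e sp by (auto simp: orthogonal_def)
  hence "oproj S v = y" using oproj_unique[OF assms yS] by blast
  thus ?thesis using yS \<open>\<forall>u\<in>S. inner (v - y) u = 0\<close> by simp
qed

lemma oproj_in: "subspace S \<Longrightarrow> oproj S (v::complex^'m) \<in> S"
  using oproj_ex by blast
lemma oproj_orth: "subspace S \<Longrightarrow> u \<in> S \<Longrightarrow> inner ((v::complex^'m) - oproj S v) u = 0"
  using oproj_ex by blast

lemma oproj_linear:
  fixes S :: "(complex^'m) set"
  assumes "subspace S" shows "linear (oproj S)"
proof
  fix x y show "oproj S (x + y) = oproj S x + oproj S y"
  proof (rule oproj_unique[OF assms])
    show "oproj S x + oproj S y \<in> S" using assms oproj_in subspace_add by blast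
    show "\<forall>u\<in>S. inner (x + y - (oproj S x + oproj S y)) u = 0"
    proof
      fix u assume "u \<in> S"
      hence "inner (x - oproj S x) u = 0" "inner (y - oproj S y) u = 0" using oproj_orth[OF assms] by auto
      moreover have "x + y - (oproj S x + oproj S y) = (x - oproj S x) + (y - oproj S y)" by simp
      ultimately show "inner (x + y - (oproj S x + oproj S y)) u = 0" by (simp only: inner_add_left)
    qed
  qed
next
  fix r and x :: "complex^'m" show "oproj S (r *\<^sub>R x) = r *\<^sub>R oproj S x"
  proof (rule oproj_unique[OF assms])
    show "r *\<^sub>R oproj S x \<in> S" using assms oproj_in subspace_scale by blast
    show "\<forall>u\<in>S. inner (r *\<^sub>R x - r *\<^sub>R oproj S x) u = 0"
    proof
      fix u assume "u \<in> S"
      hence "inner (x - oproj S x) u = 0" using oproj_orth[OF assms] by auto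
      moreover have "r *\<^sub>R x - r *\<^sub>R oproj S x = r *\<^sub>R (x - oproj S x)" by (simp add: scaleR_right_diff_distrib)
      ultimately show "inner (r *\<^sub>R x - r *\<^sub>R oproj S x) u = 0" by simp
    qed
  qed
qed

lemma oproj_dist:
  fixes S :: "(complex^'m) set"
  assumes "subspace S" "u \<in> S" shows "norm (v - oproj S v) \<le> norm (v - u)"
proof -
  have "oproj S v - u \<in> S" using assms oproj_in subspace_diff by blast
  hence o: "inner (v - oproj S v) (oproj S v - u) = 0" using oproj_orth[OF assms(1)] by blast
  have "(norm (v - u))\<^sup>2 = (norm (v - oproj S v))\<^sup>2 + (norm (oproj S v - u))\<^sup>2"
    using norm_add_Pythagorean[of "v - oproj S v" "oproj S v - u"] o by (simp add: orthogonal_def)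
  hence "(norm (v - oproj S v))\<^sup>2 \<le> (norm (v - u))\<^sup>2" using zero_le_power2[of "norm (oproj S v - u)"] zero_le_power2[of "norm (v - oproj S v)"] by linarith
  thus ?thesis using power2_le_imp_le norm_ge_zero by blast
qed

lemma oproj_norm:
  fixes S :: "(complex^'m) set"
  assumes "subspace S" shows "norm (oproj S v) \<le> norm v"
proof -
  have o: "inner (v - oproj S v) (oproj S v) = 0" using oproj_orth[OF assms] oproj_in[OF assms] by blast
  have "(norm v)\<^sup>2 = (norm (v - oproj S v))\<^sup>2 + (norm (oproj S v))\<^sup>2"
    using norm_add_Pythagorean[of "v - oproj S v" "oproj S v"] o by (simp add: orthogonal_def)
  hence "(norm (oproj S v))\<^sup>2 \<le> (norm v)\<^sup>2" using zero_le_power2[of "norm (v - oproj S v)"] by linarith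
  thus ?thesis using power2_le_imp_le norm_ge_zero by blast
qed

lemma oproj_fix: "subspace S \<Longrightarrow> (v::complex^'m) \<in> S \<Longrightarrow> oproj S v = v"
  by (rule oproj_unique) auto

lemma oproj_fixD: "subspace S \<Longrightarrow> oproj S (v::complex^'m) = v \<Longrightarrow> v \<in> S"
  using oproj_in[of S v] by simp

lemma oproj_bl: "subspace S \<Longrightarrow> bounded_linear (oproj (S::(complex^'m) set))"
  using oproj_linear linear_conv_bounded_linear by blast

lemma grass_compact:
  fixes S :: "nat \<Rightarrow> (complex^'m) set"
  assumes "\<forall>i. subspace (S i)"
  shows "\<exists>r T. strict_mono r \<and> subspace_conv (S \<circ> r) T"
proof -
  define P where "P i = Blinfun (oproj (S i))" for i
  have Pa: "blinfun_apply (P i) = oproj (S i)" for i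
    unfolding P_def using assms oproj_bl bounded_linear_Blinfun_apply by blast
  have "norm (P i) \<le> 1" for i
    by (rule norm_blinfun_bound) (auto simp: Pa intro: oproj_norm assms[rule_format])
  hence "bounded (range P)" unfolding bounded_iff by (intro exI[of _ 1]) blast
  then obtain l r where r: "strict_mono r" and lim: "(P \<circ> r) \<longlonglongrightarrow> l"
    using bounded_imp_convergent_subsequence by blast
  have ap: "(\<lambda>i. oproj (S (r i)) v) \<longlonglongrightarrow> blinfun_apply l v" for v
  proof -
    have "(\<lambda>i. blinfun_apply ((P \<circ> r) i) v) \<longlonglongrightarrow> blinfun_apply l v"
      using lim by (intro tendsto_intros) (simp add: o_def)
    thus ?thesis by (simp add: Pa o_def)
  qed
  define T where "T = range (blinfun_apply l)"
  have sT: "subspace T" unfolding T_def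
    unfolding subspace_def
  proof (intro conjI ballI allI)
    show "0 \<in> range (blinfun_apply l)" using blinfun.zero_right[of l] by (metis rangeI)
  next
    fix x y assume "x \<in> range (blinfun_apply l)" "y \<in> range (blinfun_apply l)"
    then obtain a b where "x = blinfun_apply l a" "y = blinfun_apply l b" by blast
    hence "x + y = blinfun_apply l (a + b)" by (simp add: blinfun.add_right)
    thus "x + y \<in> range (blinfun_apply l)" by blast
  next
    fix c :: real and x assume "x \<in> range (blinfun_apply l)"
    then obtain a where "x = blinfun_apply l a" by blast
    hence "c *\<^sub>R x = blinfun_apply l (c *\<^sub>R a)" by (simp add: blinfun.scaleR_right)
    thus "c *\<^sub>R x \<in> range (blinfun_apply l)" by blast
  qed
  have "oproj T v = blinfun_apply l v" for v
  proof (rule oproj_unique[OF sT])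
    show "blinfun_apply l v \<in> T" by (simp add: T_def)
    show "\<forall>u\<in>T. inner (v - blinfun_apply l v) u = 0"
    proof
      fix u assume "u \<in> T" then obtain x where x: "u = blinfun_apply l x" by (auto simp: T_def)
      have "(\<lambda>i. inner (v - oproj (S (r i)) v) (oproj (S (r i)) x)) \<longlonglongrightarrow> inner (v - blinfun_apply l v) (blinfun_apply l x)"
        by (intro tendsto_intros ap)
      moreover have "inner (v - oproj (S (r i)) v) (oproj (S (r i)) x) = 0" for i
        using oproj_orth oproj_in assms by blast
      ultimately have "(\<lambda>i. 0) \<longlonglongrightarrow> inner (v - blinfun_apply l v) (blinfun_apply l x)" by simp
      hence "inner (v - blinfun_apply l v) (blinfun_apply l x) = 0" using LIMSEQ_unique tendsto_const by blast
      thus "inner (v - blinfun_apply l v) u = 0" using x by simp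
    qed
  qed
  hence "subspace_conv (S \<circ> r) T" using sT assms ap by (simp add: subspace_conv_def)
  thus ?thesis using r by blast
qed



lemma cmul_linear: "linear (\<lambda>h. cmul h (z::complex^'k))"
  unfolding linear_iff by (auto simp: cmul_def vec_eq_iff algebra_simps)

lemma cmul_bl: "bounded_linear (\<lambda>h. cmul h (z::complex^'k))"
  using cmul_linear linear_conv_bounded_linear by blast

lemma open_cmul_pre: "open U \<Longrightarrow> open {s. cmul s (z::complex^'k) \<in> U}"
proof -
  assume "open U"
  hence "open ((\<lambda>s. cmul s z) -` U)"
    by (rule continuous_open_vimage) (rule linear_continuous_at[OF cmul_bl])
  thus ?thesis by (simp add: vimage_def)
qed

lemma clin:
  fixes D :: "complex^'k \<Rightarrow> complex"
  assumes "linear D" "\<forall>v. D (cmul \<i> v) = \<i> * D v"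
  shows "D (cmul a v) = a * D v"
proof -
  have e: "cmul a v = Re a *\<^sub>R v + Im a *\<^sub>R cmul \<i> v"
  proof -
    have "a * v $ j = Re a *\<^sub>R v $ j + Im a *\<^sub>R (\<i> * v $ j)" for j
      by (subst complex_eq[of a]) (simp add: scaleR_conv_of_real algebra_simps)
    thus ?thesis by (simp add: cmul_def vec_eq_iff)
  qed
  have "D (cmul a v) = Re a *\<^sub>R D v + Im a *\<^sub>R D (cmul \<i> v)"
    unfolding e using assms(1) by (simp add: linear_add linear_scale)
  also have "\<dots> = (of_real (Re a) + \<i> * of_real (Im a)) * D v"
    using assms(2) by (simp add: scaleR_conv_of_real algebra_simps)
  also have "\<dots> = a * D v" using complex_eq[of a] by simp
  finally show ?thesis .
qed

lemma holo_line:
  assumes "holo_on U g"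
  shows "(\<lambda>s. g (cmul s z)) holomorphic_on {s. cmul s z \<in> U}"
  unfolding holomorphic_on_def
proof
  fix s assume "s \<in> {s. cmul s z \<in> U}"
  then obtain D where d: "(g has_derivative D) (at (cmul s z))" and ci: "\<forall>v. D (cmul \<i> v) = \<i> * D v"
    using assms unfolding holo_on_def by blast
  have lD: "linear D" using d has_derivative_linear by blast
  have l: "((\<lambda>s. cmul s z) has_derivative (\<lambda>h. cmul h z)) (at s)"
    using cmul_bl bounded_linear_imp_has_derivative by blast
  have c: "((g \<circ> (\<lambda>s. cmul s z)) has_derivative (D \<circ> (\<lambda>h. cmul h z))) (at s)"
    using diff_chain_at[OF l] d by blast
  have "(D \<circ> (\<lambda>h. cmul h z)) = (\<lambda>h. D z * h)"
    using clin[OF lD ci] by (auto simp: mult.commute)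
  hence "((\<lambda>s. g (cmul s z)) has_field_derivative D z) (at s)"
    using c by (simp add: has_field_derivative_def o_def)
  thus "(\<lambda>s. g (cmul s z)) field_differentiable at s within {s. cmul s z \<in> U}"
    using field_differentiable_def has_field_derivative_at_within by blast
qed

lemma deriv_scale:
  fixes h :: "complex \<Rightarrow> complex"
  assumes h: "h holomorphic_on W" "open W" "c \<noteq> 0"
  shows "c * s \<in> W \<Longrightarrow> (deriv ^^ k) (\<lambda>s. h (c * s)) s = c ^ k * (deriv ^^ k) h (c * s)"
proof (induction k arbitrary: s)
  case 0 thus ?case by simp
next
  case (Suc k)
  have oW': "open {s. c * s \<in> W}"
  proof -
    have "open ((\<lambda>s. c * s) -` W)"
      by (rule continuous_open_vimage[OF h(2)]) (intro continuous_intros)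
    thus ?thesis by (simp add: vimage_def)
  qed
  have ev: "eventually (\<lambda>x. (deriv ^^ k) (\<lambda>s. h (c * s)) x = c ^ k * (deriv ^^ k) h (c * x)) (nhds s)"
  proof -
    have "eventually (\<lambda>x. x \<in> {s. c * s \<in> W}) (nhds s)"
      using eventually_nhds_in_open[OF oW'] Suc.prems by simp
    thus ?thesis by (rule eventually_mono) (use Suc.IH in simp)
  qed
  have H: "(deriv ^^ k) h holomorphic_on W" using holomorphic_higher_deriv h by blast
  have d1: "((deriv ^^ k) h has_field_derivative deriv ((deriv ^^ k) h) (c * s)) (at (c * s))"
    using holomorphic_derivI[OF H h(2) Suc.prems] by blast
  have d2: "((\<lambda>x. c * x) has_field_derivative c) (at s)"
    using DERIV_cmult[OF DERIV_ident, of c] by simp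
  have "((\<lambda>x. c ^ k * (deriv ^^ k) h (c * x)) has_field_derivative c ^ k * (deriv ((deriv ^^ k) h) (c * s) * c)) (at s)"
    by (rule DERIV_cmult) (rule DERIV_chain2[OF d1 d2])
  hence "deriv (\<lambda>x. c ^ k * (deriv ^^ k) h (c * x)) s = c ^ k * (deriv ((deriv ^^ k) h) (c * s) * c)"
    by (rule DERIV_imp_deriv)
  moreover have "deriv ((deriv ^^ k) (\<lambda>s. h (c * s))) s = deriv (\<lambda>x. c ^ k * (deriv ^^ k) h (c * x)) s"
    by (rule deriv_cong_ev[OF ev refl])
  ultimately show ?case by (simp add: algebra_simps)
qed

lemma hom_part_scale:
  assumes "holo_on U g" "0 \<in> U" "c \<noteq> 0"
  shows "hom_part g k (cmul c z) = c ^ k * hom_part g k z"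
proof -
  have U: "open U" using assms(1) by (simp add: holo_on_def)
  have hol: "(\<lambda>s. g (cmul s z)) holomorphic_on {s. cmul s z \<in> U}"
    using holo_line[OF assms(1)] by blast
  have 0: "c * 0 \<in> {s. cmul s z \<in> U}" using assms(2) by (simp add: cmul_def vec_eq_iff zero_vec_def)
  have e: "(\<lambda>s. g (cmul s (cmul c z))) = (\<lambda>s. (\<lambda>s. g (cmul s z)) (c * s))"
    by (auto simp: cmul_def vec_eq_iff algebra_simps)
  show ?thesis unfolding hom_part_def e using deriv_scale[OF hol open_cmul_pre[OF U] assms(3) 0] by simp
qed

lemma initial_form_scale:
  assumes "holo_on U g" "0 \<in> U" "c \<noteq> 0"
  shows "initial_form g (cmul c z) = c ^ ord0 g * initial_form g z"
  unfolding initial_form_def using hom_part_scale[OF assms] by blast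

definition sc :: "real \<Rightarrow> complex^('n::finite option) \<Rightarrow> complex^('n option)" where
  "sc l w = (\<chi> j. (if j = None then complex_of_real (inverse l) else complex_of_real l) * w $ j)"

lemma zpart_sc: "zpart (sc l w) = cmul (of_real l) (zpart w)"
  by (simp add: zpart_def sc_def cmul_def)
lemma tpart_sc: "tpart (sc l w) = of_real (inverse l) * tpart w"
  by (simp add: tpart_def sc_def)
lemma sc_inv: "l \<noteq> 0 \<Longrightarrow> sc (inverse l) (sc l w) = w"
  by (simp add: sc_def vec_eq_iff)
lemma sc_inv': "l \<noteq> 0 \<Longrightarrow> sc l (sc (inverse l) w) = w"
  by (simp add: sc_def vec_eq_iff)

lemma cmul_sc: "l \<noteq> 0 \<Longrightarrow> cmul (tpart (sc l w)) (zpart (sc l w)) = cmul (tpart w) (zpart w)"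
  by (simp add: zpart_sc tpart_sc cmul_def vec_eq_iff)

lemma Fspec_sc:
  assumes "holo_on U (f i)" "0 \<in> U" "l > 0"
  shows "Fspec f i (sc l w) = of_real l ^ ord0 (f i) * Fspec f i w"
proof (cases "tpart w = 0")
  case True
  hence "tpart (sc l w) = 0" by (simp add: tpart_sc)
  thus ?thesis using True initial_form_scale[OF assms(1,2), of "of_real l"] assms(3)
    by (simp add: Fspec_def zpart_sc)
next
  case False
  have t: "tpart (sc l w) \<noteq> 0" using assms(3) False by (simp add: tpart_sc)
  have c: "cmul (tpart (sc l w)) (zpart (sc l w)) = cmul (tpart w) (zpart w)"
    using cmul_sc[of l w] assms(3) by simp
  have "Fspec f i (sc l w) = f i (cmul (tpart w) (zpart w)) / tpart (sc l w) ^ ord0 (f i)"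
    unfolding Fspec_def using t c by simp
  also have "\<dots> = of_real l ^ ord0 (f i) * (f i (cmul (tpart w) (zpart w)) / tpart w ^ ord0 (f i))"
    using False assms(3) by (simp add: tpart_sc power_mult_distrib field_simps)
  also have "\<dots> = of_real l ^ ord0 (f i) * Fspec f i w" using False by (simp add: Fspec_def)
  finally show ?thesis .
qed

lemma spec_sc:
  assumes "\<forall>i<p. holo_on U (f i)" "0 \<in> U" "l > 0" "w \<in> spec_space U p f"
  shows "sc l w \<in> spec_space U p f"
  using assms Fspec_sc[of U f _ l w] cmul_sc[of l w] by (simp add: spec_space_def)

lemma spec_sc_iff:
  assumes "\<forall>i<p. holo_on U (f i)" "0 \<in> U" "l > 0"
  shows "sc l w \<in> spec_space U p f \<longleftrightarrow> w \<in> spec_space U p f"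
  using spec_sc[OF assms] spec_sc[OF assms(1,2), of "inverse l" "sc l w"] assms(3)
  by (auto simp: sc_inv)



lemma sc_linear: "linear (sc l :: complex^('n::finite option) \<Rightarrow> _)"
  unfolding linear_iff by (auto simp: sc_def vec_eq_iff algebra_simps)

lemma sc_bl: "bounded_linear (sc l :: complex^('n::finite option) \<Rightarrow> _)"
  using sc_linear linear_conv_bounded_linear by blast

lemma sc_cmul: "sc l (cmul a v) = cmul a (sc l v)"
  by (simp add: sc_def cmul_def vec_eq_iff algebra_simps)

lemma sc_image_iff:
  assumes "l \<noteq> 0" shows "y \<in> sc l ` V \<longleftrightarrow> sc (inverse l) y \<in> V"
proof
  assume "y \<in> sc l ` V"
  then obtain x where "x \<in> V" "y = sc l x" by blast
  thus "sc (inverse l) y \<in> V" using sc_inv[OF assms, of x] by simp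
next
  assume "sc (inverse l) y \<in> V"
  moreover have "y = sc l (sc (inverse l) y)" by (rule sym, rule sc_inv'[OF assms])
  ultimately show "y \<in> sc l ` V" by blast
qed

lemma sR_nth: "((r::real) *\<^sub>R (v::complex^'k)) $ j = of_real r * v $ j"
  unfolding vector_scaleR_component by (rule scaleR_conv_of_real)

lemma local_eqns_sc:
  fixes S :: "(complex^('n::finite option)) set"
  assumes le: "local_eqns S x V r g D" and inv: "\<forall>w. w \<in> S \<longleftrightarrow> sc l w \<in> S" and l: "l > 0"
  shows "local_eqns S (sc l x) (sc l ` V) r (\<lambda>j y. g j (sc (inverse l) y)) (\<lambda>j y. D j (sc (inverse l) y))"
proof -
  let ?B = "sc (inverse l) :: complex^('n option) \<Rightarrow> _"
  have l0: "l \<noteq> 0" using l by simp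
  have im: "y \<in> sc l ` V \<longleftrightarrow> ?B y \<in> V" for y using sc_image_iff[OF l0] .
  have Bx: "?B (sc l x) = x" using sc_inv[OF l0] .
  have Bsc: "sc l (?B y) = y" for y using sc_inv'[OF l0] .
  have SB: "y \<in> S \<longleftrightarrow> ?B y \<in> S" for y using inv Bsc by metis
  from le have xS: "x \<in> S" and oV: "open V" and xV: "x \<in> V" and hol: "\<forall>j<r. holo_on V (g j)"
    and eq: "S \<inter> V = {y\<in>V. \<forall>j<r. g j y = 0}" and der: "\<forall>j<r. (g j has_derivative D j) (at x)"
    and ind: "\<forall>c :: nat \<Rightarrow> complex. (\<forall>v. (\<Sum>j<r. c j * D j v) = 0) \<longrightarrow> (\<forall>j<r. c j = 0)"
    unfolding local_eqns_def by blast+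
  have Bd: "(?B has_derivative ?B) (at y)" for y using sc_bl bounded_linear_imp_has_derivative by blast
  have oV': "open (sc l ` V)"
  proof -
    have "open (?B -` V)" by (rule continuous_open_vimage[OF oV]) (rule linear_continuous_at[OF sc_bl])
    moreover have "?B -` V = sc l ` V" using im by auto
    ultimately show ?thesis by simp
  qed
  have hol': "holo_on (sc l ` V) (\<lambda>y. g j (?B y))" if j: "j < r" for j
    unfolding holo_on_def
  proof (intro conjI oV' ballI)
    fix y assume "y \<in> sc l ` V"
    hence "?B y \<in> V" using im by blast
    then obtain D' where d: "(g j has_derivative D') (at (?B y))" and ci: "\<forall>v. D' (cmul \<i> v) = \<i> * D' v"
      using hol j unfolding holo_on_def by blast
    have "((g j \<circ> ?B) has_derivative (D' \<circ> ?B)) (at y)" using diff_chain_at[OF Bd d] .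
    moreover have "\<forall>v. (D' \<circ> ?B) (cmul \<i> v) = \<i> * (D' \<circ> ?B) v" using ci by (simp add: sc_cmul)
    ultimately show "\<exists>D. ((\<lambda>y. g j (?B y)) has_derivative D) (at y) \<and> (\<forall>v. D (cmul \<i> v) = \<i> * D v)"
      by (auto simp: o_def)
  qed
  have eq': "S \<inter> sc l ` V = {y \<in> sc l ` V. \<forall>j<r. g j (?B y) = 0}"
  proof -
    have "y \<in> S \<inter> sc l ` V \<longleftrightarrow> ?B y \<in> S \<inter> V" for y using im SB by blast
    also have "\<dots> y \<longleftrightarrow> ?B y \<in> V \<and> (\<forall>j<r. g j (?B y) = 0)" for y using eq by blast
    finally show ?thesis using im by blast
  qed
  have der': "((\<lambda>y. g j (?B y)) has_derivative (\<lambda>y. D j (?B y))) (at (sc l x))" if "j < r" for j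
  proof -
    have "(g j has_derivative D j) (at (?B (sc l x)))" using der that Bx by simp
    from diff_chain_at[OF Bd this] show ?thesis by (simp add: o_def)
  qed
  have ind': "\<forall>c :: nat \<Rightarrow> complex. (\<forall>v. (\<Sum>j<r. c j * D j (?B v)) = 0) \<longrightarrow> (\<forall>j<r. c j = 0)"
  proof (rule allI, rule impI)
    fix c :: "nat \<Rightarrow> complex" assume h: "\<forall>v. (\<Sum>j<r. c j * D j (?B v)) = 0"
    have "\<forall>u. (\<Sum>j<r. c j * D j u) = 0"
    proof
      fix u show "(\<Sum>j<r. c j * D j u) = 0" using h[rule_format, of "sc l u"] by (simp add: sc_inv[OF l0])
    qed
    thus "\<forall>j<r. c j = 0" using ind by blast
  qed
  have "sc l x \<in> S" using xS inv by blast
  moreover have "sc l x \<in> sc l ` V" using xV by blast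
  ultimately show ?thesis unfolding local_eqns_def using oV' hol' eq' der' ind' by blast
qed

lemma tangent_set_sc:
  assumes "l \<noteq> 0"
  shows "{v. \<forall>j<r. D j (sc (inverse l) v) = 0} = sc l ` {u. \<forall>j<r. D j u = 0}"
proof -
  have "v \<in> sc l ` {u. \<forall>j<r. D j u = 0} \<longleftrightarrow> sc (inverse l) v \<in> {u. \<forall>j<r. D j u = 0}" for v
    using sc_image_iff[OF assms] .
  thus ?thesis by auto
qed

lemma smooth_sc:
  fixes S :: "(complex^('n::finite option)) set"
  assumes "x \<in> smooth_part S" "\<forall>w. w \<in> S \<longleftrightarrow> sc l w \<in> S" "l > 0"
  shows "sc l x \<in> smooth_part S"
  using assms local_eqns_sc[OF _ assms(2,3)] unfolding smooth_part_def smooth_pt_dim_def by blast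

lemma tangent_sc:
  fixes S :: "(complex^('n::finite option)) set"
  assumes "tangent_at S x T" "\<forall>w. w \<in> S \<longleftrightarrow> sc l w \<in> S" "l > 0"
  shows "tangent_at S (sc l x) (sc l ` T)"
proof -
  obtain V r g D where le: "local_eqns S x V r g D" and T: "T = {v. \<forall>j<r. D j v = 0}"
    using assms(1) unfolding tangent_at_def by blast
  have "sc l ` T = {v. \<forall>j<r. D j (sc (inverse l) v) = 0}" using tangent_set_sc[of l r D] assms(3) T by simp
  thus ?thesis unfolding tangent_at_def
    using local_eqns_sc[OF le assms(2,3)] by blast
qed

lemma local_eqns_D:
  assumes "local_eqns S x V r g D" "j < r"
  shows "linear (D j) \<and> (\<forall>a v. D j (cmul a v) = a * D j v)"
proof -
  from assms have hol: "holo_on V (g j)" and xV: "x \<in> V" and d: "(g j has_derivative D j) (at x)"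
    unfolding local_eqns_def by blast+
  obtain D' where d': "(g j has_derivative D') (at x)" and ci: "\<forall>v. D' (cmul \<i> v) = \<i> * D' v"
    using hol xV unfolding holo_on_def by blast
  have "D j = D'" using has_derivative_unique[OF d d'] .
  moreover have lD: "linear D'" using d' has_derivative_linear by blast
  ultimately show ?thesis using clin[OF lD ci] by blast
qed

lemma tangent_props:
  assumes "tangent_at S x T"
  shows "subspace T \<and> (\<forall>a v. v \<in> T \<longrightarrow> cmul a v \<in> T)"
proof -
  obtain V r g D where le: "local_eqns S x V r g D" and T: "T = {v. \<forall>j<r. D j v = 0}"
    using assms(1) unfolding tangent_at_def by blast
  have L: "\<And>j. j < r \<Longrightarrow> linear (D j)" and C: "\<And>j a v. j < r \<Longrightarrow> D j (cmul a v) = a * D j v"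
    using local_eqns_D[OF le] by blast+
  have "subspace T" unfolding subspace_def T
    using L by (auto simp: linear_0 linear_add linear_scale)
  moreover have "\<forall>a v. v \<in> T \<longrightarrow> cmul a v \<in> T" unfolding T using C by auto
  ultimately show ?thesis by blast
qed

definition ov :: "complex^('n::finite option) \<Rightarrow> complex^('n option)" where
  "ov w = (\<chi> j. if j = None then - w $ j else w $ j)"

lemma orbit_tangent:
  fixes S :: "(complex^('n::finite option)) set"
  assumes le: "local_eqns S w V r g D" and inv: "\<forall>l>0. \<forall>w. w \<in> S \<longrightarrow> sc l w \<in> S" and j: "j < r"
  shows "D j (ov w) = 0"
proof -
  define wz where "wz = (\<chi> j. if j = None then 0 else w $ j)"
  define wt where "wt = (\<chi> j. if j = None then w $ j else (0::complex))"
  define \<phi> where "\<phi> l = sc l w" for l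
  have "\<phi> l $ j = (l *\<^sub>R wz + inverse l *\<^sub>R wt) $ j" for l j
    unfolding vector_add_component vector_scaleR_component
    by (simp add: \<phi>_def sc_def wz_def wt_def scaleR_conv_of_real)
  hence phi: "\<phi> = (\<lambda>l. l *\<^sub>R wz + inverse l *\<^sub>R wt)"
    by (simp add: fun_eq_iff vec_eq_iff)
  have "((\<lambda>l. l *\<^sub>R wz + inverse l *\<^sub>R wt) has_vector_derivative
      (1 *\<^sub>R 0 + 1 *\<^sub>R wz + (inverse 1 *\<^sub>R 0 + (- (inverse 1 ^ Suc (Suc 0))) *\<^sub>R wt))) (at (1::real))"
    by (intro has_vector_derivative_add has_vector_derivative_scaleR DERIV_ident DERIV_inverse
        has_vector_derivative_const) simp
  moreover have "1 *\<^sub>R 0 + 1 *\<^sub>R wz + (inverse 1 *\<^sub>R 0 + (- (inverse 1 ^ Suc (Suc 0))) *\<^sub>R wt) = ov w"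
    by (auto simp: ov_def wz_def wt_def vec_eq_iff)
  ultimately have pd: "(\<phi> has_derivative (\<lambda>h. h *\<^sub>R ov w)) (at 1)"
    by (simp add: phi has_vector_derivative_def)
  have p1: "\<phi> 1 = w" by (simp add: \<phi>_def sc_def vec_eq_iff)
  from le have oV: "open V" and wV: "w \<in> V" and eq: "S \<inter> V = {y\<in>V. \<forall>j<r. g j y = 0}"
    and d: "(g j has_derivative D j) (at w)" and wS: "w \<in> S"
    using j unfolding local_eqns_def by blast+
  have c: "((g j \<circ> \<phi>) has_derivative (D j \<circ> (\<lambda>h. h *\<^sub>R ov w))) (at 1)"
    using diff_chain_at[OF pd] d p1 by simp
  have cont: "isCont \<phi> 1" using has_derivative_continuous[OF pd] .
  have ev1: "eventually (\<lambda>l. \<phi> l \<in> V) (at (1::real))"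
    using cont oV wV p1 by (simp add: isCont_def tendsto_def)
  have ev2: "eventually (\<lambda>l::real. l > 0) (at 1)"
    using eventually_at_topological[of "\<lambda>l::real. l > 0" 1] by (metis greaterThan_iff open_greaterThan zero_less_one)
  have ev: "eventually (\<lambda>l. 0 = (g j \<circ> \<phi>) l) (at (1::real))"
    using ev1 ev2
  proof eventually_elim
    case (elim l)
    hence "\<phi> l \<in> S" using inv wS by (simp add: \<phi>_def)
    thus ?case using elim eq j by (auto simp: o_def)
  qed
  have g0: "(0::complex) = (g j \<circ> \<phi>) 1" using wS wV eq j p1 by (auto simp: o_def)
  have "((g j \<circ> \<phi>) has_derivative (\<lambda>h. 0)) (at 1)"
    using has_derivative_transform_eventually[OF has_derivative_const ev g0] by (simp add: o_def)
  hence "(D j \<circ> (\<lambda>h. h *\<^sub>R ov w)) = (\<lambda>h. 0)" using has_derivative_unique[OF c] by blast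
  hence "D j (1 *\<^sub>R ov w) = 0" by (metis comp_apply)
  thus ?thesis by simp
qed

lemma tangent_ov:
  fixes S :: "(complex^('n::finite option)) set"
  assumes "tangent_at S w T" "\<forall>l>0. \<forall>w. w \<in> S \<longrightarrow> sc l w \<in> S"
  shows "ov w \<in> T"
  using assms orbit_tangent unfolding tangent_at_def by blast

lemma axis_tangent: "tangent_at (spec_axis :: (complex^('n::finite option)) set) 0 spec_axis"
proof -
  obtain e :: "nat \<Rightarrow> 'n" where e: "bij_betw e {..<CARD('n)} UNIV"
    using bij_betw_from_nat_into_finite[of "UNIV :: 'n set"] by auto
  define g :: "nat \<Rightarrow> complex^('n option) \<Rightarrow> complex" where "g j w = w $ Some (e j)" for j w
  have ax: "spec_axis = {y :: complex^('n option). \<forall>j<CARD('n). g j y = 0}"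
  proof -
    have "zpart y = 0 \<longleftrightarrow> (\<forall>j<CARD('n). g j y = 0)" for y :: "complex^('n option)"
    proof
      assume "zpart y = 0" thus "\<forall>j<CARD('n). g j y = 0"
        by (simp add: g_def zpart_def vec_eq_iff)
    next
      assume h: "\<forall>j<CARD('n). g j y = 0"
      have "y $ Some k = 0" for k
      proof -
        obtain j where "j < CARD('n)" "k = e j" using e unfolding bij_betw_def by fastforce
        thus ?thesis using h by (simp add: g_def)
      qed
      thus "zpart y = 0" by (simp add: zpart_def vec_eq_iff)
    qed
    thus ?thesis by (auto simp: spec_axis_def)
  qed
  have hol: "holo_on UNIV (g j)" for j
    unfolding holo_on_def g_def
  proof (intro conjI open_UNIV ballI)
    fix x :: "complex^('n option)"
    show "\<exists>D. ((\<lambda>w. w $ Some (e j)) has_derivative D) (at x) \<and>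
       (\<forall>v. D (cmul \<i> v) = \<i> * D v)"
      by (rule exI[of _ "\<lambda>w. w $ Some (e j)"])
        (use bounded_linear_vec_nth bounded_linear_imp_has_derivative in \<open>auto simp: cmul_def\<close>)
  qed
  have der: "(g j has_derivative g j) (at x)" for j x
    unfolding g_def using bounded_linear_vec_nth bounded_linear_imp_has_derivative by blast
  have ind: "\<forall>c :: nat \<Rightarrow> complex. (\<forall>v. (\<Sum>j<CARD('n). c j * g j v) = 0) \<longrightarrow> (\<forall>j<CARD('n). c j = 0)"
  proof (intro allI impI)
    fix c :: "nat \<Rightarrow> complex" and k assume h: "\<forall>v. (\<Sum>j<CARD('n). c j * g j v) = 0" and k: "k < CARD('n)"
    define v :: "complex^('n option)" where "v = (\<chi> m. if m = Some (e k) then 1 else 0)"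
    have "c j * g j v = (if j = k then c j else 0)" if "j < CARD('n)" for j
    proof -
      have "e j = e k \<longleftrightarrow> j = k" using e that k unfolding bij_betw_def inj_on_def by auto
      thus ?thesis by (simp add: g_def v_def)
    qed
    hence "(\<Sum>j<CARD('n). c j * g j v) = (\<Sum>j<CARD('n). (if j = k then c j else 0))" by (intro sum.cong) auto
    also have "\<dots> = c k" using k by simp
    finally show "c k = 0" using h by simp
  qed
  have "(0 :: complex^('n option)) \<in> spec_axis" by (simp add: spec_axis_def zpart_def vec_eq_iff)
  hence "local_eqns spec_axis 0 UNIV CARD('n) g g"
    unfolding local_eqns_def using hol der ind ax by auto
  thus ?thesis unfolding tangent_at_def using ax by blast
qed



lemma vec_norm_mono:
  fixes x :: "'a::real_normed_vector^'k" and y :: "'b::real_normed_vector^'k"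
  assumes "\<And>j. norm (x $ j) \<le> K * norm (y $ j)" "K \<ge> 0"
  shows "norm x \<le> K * norm y"
proof -
  have "norm x \<le> L2_set (\<lambda>j. K * norm (y $ j)) UNIV"
    unfolding norm_vec_def by (rule L2_set_mono) (use assms in auto)
  also have "\<dots> = K * norm y" unfolding norm_vec_def using L2_set_right_distrib[OF assms(2), of "\<lambda>j. norm (y $ j)" UNIV] by simp
  finally show ?thesis .
qed

lemma norm_le_sum_vec: "norm (x :: 'a::real_normed_vector^'k) \<le> (\<Sum>j\<in>UNIV. norm (x $ j))"
  unfolding norm_vec_def by (rule L2_set_le_sum) simp

lemma norm_cmul: "norm (cmul k (v::complex^'k)) = norm k * norm v"
proof -
  have "norm (cmul k v) = L2_set (\<lambda>j. norm k * norm (v $ j)) UNIV"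
    unfolding norm_vec_def cmul_def by (simp add: norm_mult)
  also have "\<dots> = norm k * norm v" unfolding norm_vec_def using L2_set_right_distrib[of "norm k" "\<lambda>j. norm (v $ j)" UNIV] by simp
  finally show ?thesis .
qed

lemma subspace_conv_subseq:
  assumes "subspace_conv Ts T" "strict_mono r"
  shows "subspace_conv (Ts \<circ> r) T"
  using assms LIMSEQ_subseq_LIMSEQ[OF _ assms(2)] unfolding subspace_conv_def by (auto simp: o_def)

lemma final_limit:
  fixes Ts Cs :: "nat \<Rightarrow> (complex^'m) set"
  assumes T: "subspace_conv Ts T" and C: "subspace_conv Cs L" and l: "l \<in> L"
    and d: "\<delta> \<longlonglongrightarrow> 0"
    and ev: "eventually (\<lambda>i. \<exists>u\<in>Ts i. norm (oproj (Cs i) l - u) \<le> \<delta> i) sequentially"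
  shows "l \<in> T"
proof -
  have sT: "subspace T" "\<And>i. subspace (Ts i)" and tT: "\<And>v. (\<lambda>i. oproj (Ts i) v) \<longlonglongrightarrow> oproj T v"
    using T unfolding subspace_conv_def by blast+
  have sL: "subspace L" "\<And>i. subspace (Cs i)" and tC: "(\<lambda>i. oproj (Cs i) l) \<longlonglongrightarrow> oproj L l"
    using C unfolding subspace_conv_def by blast+
  define a where "a i = oproj (Cs i) l" for i
  have al: "a \<longlonglongrightarrow> l" using tC oproj_fix[OF sL(1) l] unfolding a_def by simp
  have la: "(\<lambda>i. norm (l - a i)) \<longlonglongrightarrow> 0"
  proof -
    have "(\<lambda>i. l - a i) \<longlonglongrightarrow> l - l" by (intro tendsto_intros al)
    thus ?thesis using tendsto_norm_zero by fastforce
  qed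
  have bound: "eventually (\<lambda>i. norm (l - oproj (Ts i) l) \<le> 2 * norm (l - a i) + \<delta> i) sequentially"
    using ev
  proof eventually_elim
    case (elim i)
    then obtain u where u: "u \<in> Ts i" "norm (a i - u) \<le> \<delta> i" by (auto simp: a_def)
    have "norm (a i - oproj (Ts i) (a i)) \<le> \<delta> i" using oproj_dist[OF sT(2) u(1), of "a i"] u(2) by linarith
    moreover have "oproj (Ts i) l - oproj (Ts i) (a i) = oproj (Ts i) (l - a i)"
      using linear_diff[OF oproj_linear[OF sT(2)]] by simp
    hence "norm (oproj (Ts i) l - oproj (Ts i) (a i)) \<le> norm (l - a i)" using oproj_norm[OF sT(2)[of i], of "l - a i"] by simp
    moreover have "norm (l - oproj (Ts i) l) \<le> norm (l - a i) + norm (a i - oproj (Ts i) (a i)) + norm (oproj (Ts i) l - oproj (Ts i) (a i))"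
    proof -
      have e: "l - oproj (Ts i) l = ((l - a i) + (a i - oproj (Ts i) (a i))) - (oproj (Ts i) l - oproj (Ts i) (a i))"
        by (simp add: algebra_simps)
      have "norm (((l - a i) + (a i - oproj (Ts i) (a i))) - (oproj (Ts i) l - oproj (Ts i) (a i)))
          \<le> norm ((l - a i) + (a i - oproj (Ts i) (a i))) + norm (oproj (Ts i) l - oproj (Ts i) (a i))"
        by (rule norm_triangle_ineq4)
      also have "\<dots> \<le> norm (l - a i) + norm (a i - oproj (Ts i) (a i)) + norm (oproj (Ts i) l - oproj (Ts i) (a i))"
        using norm_triangle_ineq[of "l - a i" "a i - oproj (Ts i) (a i)"] by linarith
      finally show ?thesis by (simp only: e)
    qed
    ultimately show ?case by linarith
  qed
  have "(\<lambda>i. 2 * norm (l - a i) + \<delta> i) \<longlonglongrightarrow> 2 * 0 + 0" by (intro tendsto_intros la d)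
  hence "(\<lambda>i. l - oproj (Ts i) l) \<longlonglongrightarrow> 0"
    using Lim_null_comparison[OF bound] by simp
  hence "(\<lambda>i. l - (l - oproj (Ts i) l)) \<longlonglongrightarrow> l - 0" by (intro tendsto_intros)
  hence "(\<lambda>i. oproj (Ts i) l) \<longlonglongrightarrow> l" by simp
  hence "oproj T l = l" using tT LIMSEQ_unique by blast
  thus ?thesis using oproj_fixD[OF sT(1)] by blast
qed

definition evec :: "complex^('n::finite option)" where
  "evec = (\<chi> j. if j = None then 1 else 0)"

lemma key_est:
  fixes w y p :: "complex^('n::finite option)" and Tt :: "(complex^('n option)) set"
  assumes sT: "subspace Tt" and cT: "\<forall>a v. v \<in> Tt \<longrightarrow> cmul a v \<in> Tt"
    and ovT: "ov w \<in> Tt" and qT: "sc (inverse lam) p \<in> Tt"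
    and lam: "lam > 0" "lam^2 * nz = 1"
    and y: "zpart y = 0"
    and pe: "norm (p - evec) \<le> 1/2"
  shows "\<exists>u\<in>Tt. norm ((w - y) - u) \<le> 2 * norm (2 * w$None - y$None) * nz * norm (p - evec)"
proof -
  define pN where "pN = p $ None"
  define c where "c = 2 * w$None - y$None"
  have nz0: "nz \<ge> 0" using lam by (metis less_eq_real_def mult_eq_0_iff zero_less_one zero_less_mult_pos zero_less_power)
  have "(p - evec) $ None = pN - 1" by (simp add: pN_def evec_def)
  hence "norm (pN - 1) \<le> 1/2" using Finite_Cartesian_Product.norm_nth_le[where x="p - evec" and i=None] pe by simp
  moreover have "norm (1::complex) - norm pN \<le> norm (pN - 1)"
    using norm_triangle_ineq3[of 1 pN] by (simp add: norm_minus_commute)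
  ultimately have pN: "norm pN \<ge> 1/2" by simp
  hence pN0: "pN \<noteq> 0" by auto
  have lam0: "lam \<noteq> 0" using lam by simp
  have ysome: "y $ Some k = 0" for k using y by (simp add: zpart_def vec_eq_iff)
  define k0 where "k0 = c / (of_real lam * pN)"
  define u where "u = ov w + cmul k0 (sc (inverse lam) p)"
  have uT: "u \<in> Tt" unfolding u_def using sT cT ovT qT subspace_add by blast
  have lamc: "complex_of_real lam ^ 2 * complex_of_real nz = 1"
    using lam(2) by (metis of_real_1 of_real_mult of_real_power)
  have comp: "((w - y) - u) $ j = (if j = None then 0 else - (c * of_real nz / pN) * p $ j)" for j
  proof (cases j)
    case None
    have "k0 * (of_real lam * pN) = c" using pN0 lam0 by (simp add: k0_def)
    thus ?thesis using None by (simp add: u_def ov_def cmul_def sc_def c_def pN_def algebra_simps)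
  next
    case (Some k)
    have "k0 * (complex_of_real (inverse lam)) = c * of_real nz / pN"
    proof -
      have "k0 * (complex_of_real (inverse lam)) = c / (of_real lam ^ 2 * pN)"
        using pN0 lam0 by (simp add: k0_def field_simps power2_eq_square)
      also have "\<dots> = c * of_real nz / pN"
        using lamc pN0 lam0 by (simp add: field_simps)
      finally show ?thesis .
    qed
    hence "k0 * (complex_of_real (inverse lam) * p $ j) = c * of_real nz / pN * p $ j" by (simp add: mult.assoc[symmetric])
    thus ?thesis using Some ysome[of k] by (simp add: u_def ov_def cmul_def sc_def)
  qed
  have "norm ((w - y) - u) \<le> (2 * norm c * nz) * norm (p - evec)"
  proof (rule vec_norm_mono)
    show "0 \<le> 2 * norm c * nz" using nz0 by simp
    fix j
    show "norm (((w - y) - u) $ j) \<le> (2 * norm c * nz) * norm ((p - evec) $ j)"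
    proof (cases j)
      case None thus ?thesis using comp nz0 by simp
    next
      case (Some k)
      have "norm (((w - y) - u) $ j) = norm c * nz * norm (p $ j) / norm pN"
        using comp Some nz0 by (simp add: norm_mult norm_divide)
      also have "\<dots> \<le> norm c * nz * norm (p $ j) * 2"
      proof -
        have "1 / norm pN \<le> 2" using pN pN0 by (simp add: divide_le_eq)
        moreover have "norm c * nz * norm (p $ j) \<ge> 0" using nz0 by simp
        ultimately have "norm c * nz * norm (p $ j) * (1 / norm pN) \<le> norm c * nz * norm (p $ j) * 2"
          by (rule mult_left_mono)
        thus ?thesis by simp
      qed
      also have "\<dots> = (2 * norm c * nz) * norm ((p - evec) $ j)" using Some by (simp add: evec_def)
      finally show ?thesis .
    qed
  qed
  thus ?thesis using uT by (auto simp: c_def)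
qed



lemma cmul_diff: "cmul k (v - u) = cmul k v - cmul k (u::complex^'k)"
  by (simp add: cmul_def vec_eq_iff algebra_simps)

theorem mainTheorem6:
  fixes X U :: "(complex^'n) set" and f :: "nat \<Rightarrow> complex^'n \<Rightarrow> complex" and p d :: nat
  assumes "0 \<in> X"
    and "open U" and "0 \<in> U" and "\<forall>i<p. holo_on U (f i)"
    and "germ_zero_set X p f"
    and "generates_ideal X p f"
    and "\<forall>i<p. \<exists>k. hom_part (f i) k \<noteq> (\<lambda>_. 0)"
    and "initial_forms_generate X p f"
    and "pure_dim X d"
    and "whitney_a (spec_space U p f) spec_axis 0"
  shows "whitney_b (spec_space U p f) spec_axis 0"
proof -
  let ?S = "spec_space U p f"
  have inv: "\<And>l w. l > 0 \<Longrightarrow> w \<in> ?S \<longleftrightarrow> sc l w \<in> ?S"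
    using spec_sc_iff[OF assms(4) assms(3)] by blast
  have invd: "\<forall>l>0. \<forall>w. w \<in> ?S \<longrightarrow> sc l w \<in> ?S" using inv by blast
  show ?thesis unfolding whitney_b_def
  proof (intro allI impI)
    fix xs ys :: "nat \<Rightarrow> complex^('n option)" and Ts T L
    assume H: "\<forall>i. xs i \<in> smooth_part ?S - spec_axis \<and> ys i \<in> spec_axis \<and> tangent_at ?S (xs i) (Ts i)"
      and xs0: "xs \<longlonglongrightarrow> 0" and ys0: "ys \<longlonglongrightarrow> 0" and cT: "subspace_conv Ts T"
      and cL: "subspace_conv (\<lambda>i. cline (xs i - ys i)) L"
    define wz where "wz i = (\<chi> j. if j = None then 0 else xs i $ j)" for i
    define nz where "nz i = norm (wz i)" for i
    define lam where "lam i = inverse (sqrt (nz i))" for i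
    define w' where "w' i = sc (lam i) (xs i)" for i
    define T' where "T' i = sc (lam i) ` Ts i" for i
    have nzpos: "nz i > 0" for i
    proof -
      have "xs i \<notin> spec_axis" using H by blast
      hence "zpart (xs i) \<noteq> 0" by (simp add: spec_axis_def)
      then obtain k where k: "xs i $ Some k \<noteq> 0" by (auto simp: zpart_def vec_eq_iff)
      have "wz i $ Some k \<noteq> 0" using k by (simp add: wz_def)
      hence "wz i \<noteq> 0" by auto
      thus ?thesis by (simp add: nz_def)
    qed
    have lampos: "lam i > 0" for i using nzpos[of i] by (simp add: lam_def)
    have lam2: "(lam i)^2 * nz i = 1" for i
      using nzpos[of i] by (simp add: lam_def power_inverse)
    have nzle: "nz i \<le> norm (xs i)" for i
      unfolding nz_def by (rule order_trans[OF vec_norm_mono[of _ 1]]) (auto simp: wz_def)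
    have sm': "w' i \<in> smooth_part ?S" for i
      unfolding w'_def using H smooth_sc[of "xs i" ?S "lam i"] inv lampos by blast
    have tg': "tangent_at ?S (w' i) (T' i)" for i
      unfolding w'_def T'_def using H tangent_sc[of ?S "xs i" "Ts i" "lam i"] inv lampos by blast
    have sub': "\<forall>i. subspace (T' i)" using tangent_props tg' by blast
    obtain r T'' where r: "strict_mono r" and cT'': "subspace_conv (T' \<circ> r) T''"
      using grass_compact[OF sub'] by blast
    have nx0: "(\<lambda>i. norm (xs i)) \<longlonglongrightarrow> 0" using xs0 tendsto_norm_zero by blast
    have w'0: "w' \<longlonglongrightarrow> 0"
    proof (rule Lim_null_comparison)
      define B where "B i = sqrt (norm (xs i)) * (1 + norm (xs i))" for i
      have comp: "norm (w' i $ j) \<le> B i" for i j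
      proof -
        have sn: "sqrt (nz i) \<le> sqrt (norm (xs i))" using nzle by simp
        have B1: "sqrt (norm (xs i)) \<le> B i" unfolding B_def distrib_left by simp
        have B2: "sqrt (norm (xs i)) * norm (xs i) \<le> B i" unfolding B_def by (simp add: algebra_simps)
        show ?thesis
        proof (cases j)
          case None
          have "norm (w' i $ j) = sqrt (nz i) * norm (xs i $ j)"
            using None nzpos[of i] by (simp add: w'_def sc_def lam_def norm_mult)
          also have "\<dots> \<le> sqrt (norm (xs i)) * norm (xs i)"
            using sn Finite_Cartesian_Product.norm_nth_le[where x="xs i" and i=j]
            by (simp add: mult_mono)
          finally show ?thesis using B2 by linarith
        next
          case (Some k)
          have "norm (xs i $ j) = norm (wz i $ j)" using Some by (simp add: wz_def)
          also have "\<dots> \<le> nz i" unfolding nz_def by (rule Finite_Cartesian_Product.norm_nth_le)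
          finally have xj: "norm (xs i $ j) \<le> nz i" .
          have "norm (w' i $ j) = lam i * norm (xs i $ j)"
            using Some lampos[of i] by (simp add: w'_def sc_def norm_mult)
          also have "\<dots> \<le> lam i * nz i" using xj lampos[of i] by (simp add: mult_left_mono)
          also have "\<dots> = sqrt (nz i)" using nzpos[of i] unfolding lam_def
            by (metis divide_inverse_commute real_div_sqrt less_eq_real_def)
          finally show ?thesis using sn B1 by linarith
        qed
      qed
      show "eventually (\<lambda>i. norm (w' i) \<le> real CARD('n option) * B i) sequentially"
      proof (rule always_eventually, rule allI)
        fix i
        have "norm (w' i) \<le> (\<Sum>j\<in>UNIV. norm (w' i $ j))" by (rule norm_le_sum_vec)
        also have "\<dots> \<le> real (card (UNIV :: 'n option set)) * B i"
          using sum_bounded_above[of UNIV "\<lambda>j. norm (w' i $ j)" "B i"] comp by simp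
        finally show "norm (w' i) \<le> real CARD('n option) * B i" .
      qed
      have "(\<lambda>i. real CARD('n option) * B i) \<longlonglongrightarrow> real CARD('n option) * (sqrt 0 * (1 + 0))"
        unfolding B_def by (intro tendsto_intros nx0)
      thus "(\<lambda>i. real CARD('n option) * B i) \<longlonglongrightarrow> 0" by simp
    qed
    have w'r: "(w' \<circ> r) \<longlonglongrightarrow> 0" using LIMSEQ_subseq_LIMSEQ[OF w'0 r] .
    have axT: "spec_axis \<subseteq> T''"
    proof -
      have "\<forall>i. (w' \<circ> r) i \<in> smooth_part ?S \<and> tangent_at ?S ((w' \<circ> r) i) ((T' \<circ> r) i)"
        using sm' tg' by simp
      thus ?thesis using assms(10) w'r cT'' axis_tangent unfolding whitney_a_def by blast
    qed
    have eT: "evec \<in> T''" using axT by (auto simp: spec_axis_def zpart_def evec_def vec_eq_iff)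
    have sT'': "subspace T''" using cT'' unfolding subspace_conv_def by blast
    define pp where "pp i = oproj (T' (r i)) evec" for i
    have ppc: "pp \<longlonglongrightarrow> evec"
    proof -
      have "(\<lambda>i. oproj ((T' \<circ> r) i) evec) \<longlonglongrightarrow> oproj T'' evec" using cT'' unfolding subspace_conv_def by blast
      thus ?thesis using oproj_fix[OF sT'' eT] unfolding pp_def by (simp add: o_def)
    qed
    have ppT: "pp i \<in> T' (r i)" for i unfolding pp_def by (rule oproj_in) (use sub' in blast)
    define eps where "eps i = norm (pp i - evec)" for i
    have eps0: "eps \<longlonglongrightarrow> 0"
    proof -
      have "(\<lambda>i. pp i - evec) \<longlonglongrightarrow> evec - evec" by (intro tendsto_intros ppc)
      thus ?thesis unfolding eps_def using tendsto_norm_zero by fastforce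
    qed
    define cc where "cc i = 2 * xs i $ None - ys i $ None" for i
    have cc0: "cc \<longlonglongrightarrow> 0"
    proof -
      have "(\<lambda>i. 2 * xs i $ None - ys i $ None) \<longlonglongrightarrow> 2 * (0::complex^('n option)) $ None - (0::complex^('n option)) $ None"
        by (intro tendsto_intros xs0 ys0)
      moreover have "cc = (\<lambda>i. 2 * xs i $ None - ys i $ None)" by (simp add: fun_eq_iff cc_def)
      ultimately show ?thesis by simp
    qed
    have ccr: "(\<lambda>i. cc (r i)) \<longlonglongrightarrow> 0" using LIMSEQ_subseq_LIMSEQ[OF cc0 r] by (simp add: o_def)
    show "L \<subseteq> T"
    proof
      fix l assume lL: "l \<in> L"
      define \<delta> where "\<delta> i = 2 * norm (cc (r i)) * eps i * norm l" for i
      have d0: "\<delta> \<longlonglongrightarrow> 0"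
      proof -
        have "\<delta> \<longlonglongrightarrow> 2 * norm (0::complex) * 0 * norm l" unfolding \<delta>_def by (intro tendsto_intros ccr eps0)
        thus ?thesis by simp
      qed
      have evh: "eventually (\<lambda>i. eps i < 1/2) sequentially" using order_tendstoD(2)[OF eps0, of "1/2"] by simp
      have ev: "eventually (\<lambda>i. \<exists>u\<in>(Ts \<circ> r) i. norm (oproj (((\<lambda>i. cline (xs i - ys i)) \<circ> r) i) l - u) \<le> \<delta> i) sequentially"
        using evh
      proof eventually_elim
        case (elim i)
        define m where "m = r i"
        have tgm: "tangent_at ?S (xs m) (Ts m)" using H by blast
        have pr: "subspace (Ts m)" "\<forall>a v. v \<in> Ts m \<longrightarrow> cmul a v \<in> Ts m" using tangent_props[OF tgm] by blast+
        have ovm: "ov (xs m) \<in> Ts m" using tangent_ov[OF tgm invd] .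
        have qm: "sc (inverse (lam m)) (pp i) \<in> Ts m"
          using ppT[of i] sc_image_iff[of "lam m" "pp i" "Ts m"] lampos[of m] by (simp add: T'_def m_def)
        have ym: "zpart (ys m) = 0" using H by (simp add: spec_axis_def)
        have pe: "norm (pp i - evec) \<le> 1/2" using elim by (simp add: eps_def)
        obtain u where uT: "u \<in> Ts m" and uB: "norm ((xs m - ys m) - u) \<le> 2 * norm (cc m) * nz m * eps i"
          using key_est[OF pr ovm qm lampos[of m] lam2[of m] ym pe] by (auto simp: cc_def eps_def)
        define v where "v = xs m - ys m"
        have sC: "subspace (cline v)" using cL unfolding subspace_conv_def v_def by blast
        define a where "a = oproj (cline v) l"
        have "a \<in> cline v" using oproj_in[OF sC] by (simp add: a_def)
        then obtain k where ak: "a = cmul k v" by (auto simp: cline_def)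
        have ku: "cmul k u \<in> Ts m" using pr uT by blast
        have "norm (wz m) \<le> 1 * norm (xs m - ys m)"
          by (rule vec_norm_mono) (use ym in \<open>auto simp: wz_def zpart_def vec_eq_iff\<close>)
        hence nzv: "nz m \<le> norm v" by (simp add: nz_def v_def)
        have al: "norm a \<le> norm l" using oproj_norm[OF sC] by (simp add: a_def)
        have "norm (a - cmul k u) = norm k * norm (v - u)" by (simp add: ak cmul_diff[symmetric] norm_cmul)
        also have "\<dots> \<le> norm k * (2 * norm (cc m) * nz m * eps i)"
          using uB by (simp add: v_def mult_left_mono)
        also have "\<dots> \<le> norm k * (2 * norm (cc m) * norm v * eps i)"
        proof -
          have "0 \<le> eps i" by (simp add: eps_def)
          hence "2 * norm (cc m) * nz m * eps i \<le> 2 * norm (cc m) * norm v * eps i"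
            using nzv by (simp add: mult_left_mono mult_right_mono)
          thus ?thesis by (simp add: mult_left_mono)
        qed
        also have "\<dots> = 2 * norm (cc m) * eps i * norm a" by (simp add: ak norm_cmul)
        also have "\<dots> \<le> 2 * norm (cc m) * eps i * norm l"
          using al by (simp add: mult_left_mono eps_def)
        finally have "norm (a - cmul k u) \<le> \<delta> i" by (simp add: \<delta>_def m_def)
        thus ?case using ku by (auto simp: a_def v_def m_def)
      qed
      show "l \<in> T"
        using final_limit[OF subspace_conv_subseq[OF cT r] subspace_conv_subseq[OF cL r] lL d0 ev] .
    qed
  qed
qed


end
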